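(* Assume $\delta=0$, $k>2$, and that a fraction $b\in(0,1)$ of firms receive patents (no link costs). Then along any sequence of symmetric investment equilibria, $$\lim_{n\to\infty}q^*(0)\,n^{1/k}=\left(\frac{k-1}{b}\right)^{1/k}.$$
   Context: Model (for each number of firms $n\ge 2$). There are $n$ firms $1,\dots,n$; firm $i$ can discover a single idea, also labelled $i$. Fixed parameters: an integer complexity $k\ge 2$, $\delta\in[0,1]$, and a cost function $c:[0,1)\to[0,\infty)$ that is continuously differentiable, increasing and convex with $c(0)=0$ and $c(p)\to\infty$ as $p\to1^-$. A set of $bn$ firms are patented (exogenously); patent status is known. Each firm chooses an investment $p_i\in[0,1)$ and an openness in $[0,1]$; $q_i(1)$ denotes the openness chosen if $i$ has a patent and $q_i(0)$ if not. Idea $i$ is discovered independently with probability $p_i$; $I$ is the set of discovered ideas. With $q_i$ the openness actually used by $i$, the interaction rate is $\iota(q_i,q_j)=q_iq_j$. For each ordered pair $i\neq j$, independently, $i$ learns directly from $j$ with probability $\iota(q_i,q_j)$, and conditional on this, independently with probability $\delta$, $i$ also learns indirectly through $j$; with $\delta=0$, $I_i$ is the set of discovered ideas $j\neq i$ such that $i$ learns directly from $j$. A technology is a $k$-element $t\subseteq I$; firm $j$ knows $t$ if $t\subseteq\{j\}\cup I_j$. Firm $i$ receives $1$ for each technology $t$ such that $i\in t$, $i$ knows $t$, no idea $j\in t$ with $j\neq i$ is patented, and either $i$ is patented or $i$ is the unique firm knowing $t$; payoff is the expected count minus $c(p_i)$. An equilibrium is a pure-strategy Nash equilibrium; an investment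 equilibrium has all $p_i>0$; it is symmetric if all patented firms choose the same action $(p^*(1),q^*(1))$ and all unpatented firms the same action $(p^*(0),q^*(0))$. Sequences are indexed by $n\to\infty$. *)

theory Defs
  imports "HOL-Analysis.Analysis"
begin

text \<open>Innovation / openness model with delta = 0.  Firms (and ideas) are
  indexed by 0,...,n-1.  A profile gives every firm i an investment p i and the
  openness q i it actually uses (i.e. q_i(1) if i is patented, q_i(0) otherwise).\<close>

definition offdiag :: "nat \<Rightarrow> (nat \<times> nat) set" where
  "offdiag n = {(i, j). i < n \<and> j < n \<and> i \<noteq> j}"

text \<open>Probability of the outcome in which exactly the ideas in D are discovered and
  exactly the ordered pairs (i,j) in L are direct-learning links (i learns from j).\<close>
definition outcome_weight ::
  "nat \<Rightarrow> (nat \<Rightarrow> real) \<Rightarrow> (nat \<Rightarrow> real) \<Rightarrow> nat set \<Rightarrow> (nat \<times> nat) set \<Rightarrow> real" where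
  "outcome_weight n p q D L =
     (\<Prod>i<n. if i \<in> D then p i else 1 - p i) *
     (\<Prod>e\<in>offdiag n. if e \<in> L then q (fst e) * q (snd e) else 1 - q (fst e) * q (snd e))"

definition learned :: "nat set \<Rightarrow> (nat \<times> nat) set \<Rightarrow> nat \<Rightarrow> nat set" where
  "learned D L i = {j \<in> D. j \<noteq> i \<and> (i, j) \<in> L}"

definition knows :: "nat set \<Rightarrow> (nat \<times> nat) set \<Rightarrow> nat \<Rightarrow> nat set \<Rightarrow> bool" where
  "knows D L j t \<longleftrightarrow> t \<subseteq> insert j (learned D L j)"

text \<open>Technologies for which firm i receives 1 (P = set of patented firms).\<close>
definition rewarded_techs ::
  "nat \<Rightarrow> nat \<Rightarrow> nat set \<Rightarrow> nat set \<Rightarrow> (nat \<times> nat) set \<Rightarrow> nat \<Rightarrow> nat set set" where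
  "rewarded_techs n k P D L i =
     {t. t \<subseteq> D \<and> card t = k \<and> i \<in> t \<and> knows D L i t \<and>
         (\<forall>j\<in>t. j \<noteq> i \<longrightarrow> j \<notin> P) \<and>
         (i \<in> P \<or> (\<forall>j<n. knows D L j t \<longrightarrow> j = i))}"

definition payoff ::
  "nat \<Rightarrow> nat \<Rightarrow> (real \<Rightarrow> real) \<Rightarrow> nat set \<Rightarrow> (nat \<Rightarrow> real) \<Rightarrow> (nat \<Rightarrow> real) \<Rightarrow> nat \<Rightarrow> real" where
  "payoff n k c P p q i =
     (\<Sum>D\<in>Pow {..<n}. \<Sum>L\<in>Pow (offdiag n).
        outcome_weight n p q D L * real (card (rewarded_techs n k P D L i))) - c (p i)"

definition is_equilibrium ::
  "nat \<Rightarrow> nat \<Rightarrow> (real \<Rightarrow> real) \<Rightarrow> nat set \<Rightarrow> (nat \<Rightarrow> real) \<Rightarrow> (nat \<Rightarrow> real) \<Rightarrow> bool" where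
  "is_equilibrium n k c P p q \<longleftrightarrow>
     (\<forall>i<n. 0 \<le> p i \<and> p i < 1 \<and> 0 \<le> q i \<and> q i \<le> 1) \<and>
     (\<forall>i<n. \<forall>p' q'. 0 \<le> p' \<longrightarrow> p' < 1 \<longrightarrow> 0 \<le> q' \<longrightarrow> q' \<le> 1 \<longrightarrow>
        payoff n k c P (p(i := p')) (q(i := q')) i \<le> payoff n k c P p q i)"

definition symmetric_investment_equilibrium ::
  "nat \<Rightarrow> nat \<Rightarrow> (real \<Rightarrow> real) \<Rightarrow> nat set \<Rightarrow> real \<Rightarrow> real \<Rightarrow> real \<Rightarrow> real \<Rightarrow> bool" where
  "symmetric_investment_equilibrium n k c P p0 q0 p1 q1 \<longleftrightarrow>
     (let p = (\<lambda>i. if i \<in> P then p1 else p0);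
          q = (\<lambda>i. if i \<in> P then q1 else q0)
      in is_equilibrium n k c P p q \<and> (\<forall>i<n. p i > 0))"

definition admissible_cost :: "(real \<Rightarrow> real) \<Rightarrow> bool" where
  "admissible_cost c \<longleftrightarrow>
     (\<exists>c'. (\<forall>x\<in>{0..<1}. (c has_real_derivative c' x) (at x within {0..<1})) \<and>
           continuous_on {0..<1} c') \<and>
     strict_mono_on {0..<1} c \<and> convex_on {0..<1} c \<and> c 0 = 0 \<and>
     filterlim c at_top (at_left 1)"

end

theory Submission
  imports Defs
begin


lemma W_split:
  fixes \<pi> :: "'a \<Rightarrow> real"
  assumes "finite S" "X \<subseteq> S"
  shows "(\<Prod>s\<in>S. if s\<in>X then \<pi> s else g s) = (\<Prod>s\<in>X. \<pi> s) * (\<Prod>s\<in>S-X. g s)"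
proof -
  have "(\<Prod>s\<in>S. if s\<in>X then \<pi> s else g s) = (\<Prod>s\<in>X. if s\<in>X then \<pi> s else g s) * (\<Prod>s\<in>S-X. if s\<in>X then \<pi> s else g s)"
    using prod.subset_diff[OF assms(2) assms(1)] by (metis mult.commute)
  also have "\<dots> = (\<Prod>s\<in>X. \<pi> s) * (\<Prod>s\<in>S-X. g s)"
    by (intro arg_cong2[where f="(*)"] prod.cong) auto
  finally show ?thesis .
qed

lemma sum_pow_subset:
  fixes \<pi> :: "'a \<Rightarrow> real"
  assumes "finite S" "E \<subseteq> S"
  shows "(\<Sum>A\<in>Pow S. (\<Prod>s\<in>S. if s\<in>A then \<pi> s else 1 - \<pi> s) * of_bool (E \<subseteq> A)) = (\<Prod>e\<in>E. \<pi> e)"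
proof -
  define g where "g s = (if s \<in> E then 0 else 1 - \<pi> s)" for s
  have "(\<Prod>e\<in>E. \<pi> e) = (\<Prod>s\<in>S. if s \<in> E then \<pi> s else 1)"
    using W_split[OF assms, of \<pi> "\<lambda>_. 1"] by simp
  also have "\<dots> = (\<Prod>s\<in>S. \<pi> s + g s)"
    by (rule prod.cong) (auto simp: g_def)
  also have "\<dots> = (\<Sum>X\<in>Pow S. (\<Prod>x\<in>X. \<pi> x) * (\<Prod>x\<in>S-X. g x))"
    by (rule prod_add[OF assms(1)])
  also have "\<dots> = (\<Sum>A\<in>Pow S. (\<Prod>s\<in>S. if s\<in>A then \<pi> s else 1 - \<pi> s) * of_bool (E \<subseteq> A))"
  proof (rule sum.cong[OF refl])
    fix X assume X: "X \<in> Pow S"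
    show "(\<Prod>x\<in>X. \<pi> x) * (\<Prod>x\<in>S-X. g x) = (\<Prod>s\<in>S. if s\<in>X then \<pi> s else 1 - \<pi> s) * of_bool (E \<subseteq> X)"
    proof (cases "E \<subseteq> X")
      case True
      then have "(\<Prod>x\<in>S-X. g x) = (\<Prod>x\<in>S-X. 1 - \<pi> x)"
        by (intro prod.cong) (auto simp: g_def)
      then show ?thesis using W_split[OF assms(1), of X \<pi> "\<lambda>s. 1 - \<pi> s"] X True by simp
    next
      case False
      then obtain e where "e \<in> E" "e \<notin> X" by auto
      then have "(\<Prod>x\<in>S-X. g x) = 0"
        using assms by (intro prod_zero) (auto simp: g_def intro!: bexI[of _ e])
      then show ?thesis using False by simp
    qed
  qed
  finally show ?thesis by simp
qed



lemma prod_one_minus: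
  fixes f :: "'a \<Rightarrow> real"
  assumes "finite J"
  shows "(\<Prod>j\<in>J. 1 - f j) = (\<Sum>X\<in>Pow J. (-1) ^ card X * (\<Prod>j\<in>X. f j))"
  using prod_diff_conv_sum[OF assms, of "\<lambda>_. 1" f] by simp

lemma prod_of_bool:
  assumes "finite J"
  shows "(\<Prod>j\<in>J. (of_bool (Q j) :: real)) = of_bool (\<forall>j\<in>J. Q j)"
  using assms by (induction J rule: finite_induct) auto

lemma sum_pow_excl:
  fixes \<pi> :: "'a \<Rightarrow> real" and E :: "'b \<Rightarrow> 'a set"
  assumes S: "finite S" and E0: "E0 \<subseteq> S" and J: "finite J" and EJ: "\<And>j. j\<in>J \<Longrightarrow> E j \<subseteq> S"
    and d0: "\<And>j. j\<in>J \<Longrightarrow> E0 \<inter> E j = {}"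
    and dJ: "\<And>j j'. j\<in>J \<Longrightarrow> j'\<in>J \<Longrightarrow> j \<noteq> j' \<Longrightarrow> E j \<inter> E j' = {}"
  shows "(\<Sum>A\<in>Pow S. (\<Prod>s\<in>S. if s\<in>A then \<pi> s else 1 - \<pi> s) *
            (of_bool (E0 \<subseteq> A) * (\<Prod>j\<in>J. 1 - of_bool (E j \<subseteq> A))))
       = (\<Prod>e\<in>E0. \<pi> e) * (\<Prod>j\<in>J. 1 - (\<Prod>e\<in>E j. \<pi> e))"
proof -
  let ?W = "\<lambda>A. (\<Prod>s\<in>S. if s\<in>A then \<pi> s else 1 - \<pi> s)"
  have fin: "finite (E j)" if "j \<in> J" for j using EJ[OF that] S finite_subset by blast
  have fin0: "finite E0" using E0 S finite_subset by blast
  have step: "(of_bool (E0 \<subseteq> A) * (\<Prod>j\<in>J. 1 - of_bool (E j \<subseteq> A)) :: real)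
      = (\<Sum>X\<in>Pow J. (-1) ^ card X * of_bool (E0 \<union> \<Union>(E ` X) \<subseteq> A))" for A
  proof -
    have "(of_bool (E0 \<subseteq> A) * (\<Prod>j\<in>J. 1 - of_bool (E j \<subseteq> A)) :: real)
       = of_bool (E0 \<subseteq> A) * (\<Sum>X\<in>Pow J. (-1) ^ card X * (\<Prod>j\<in>X. (of_bool (E j \<subseteq> A)::real)))"
      by (simp only: prod_one_minus[OF J])
    also have "\<dots> = (\<Sum>X\<in>Pow J. (-1) ^ card X * (of_bool (E0 \<subseteq> A) * (\<Prod>j\<in>X. (of_bool (E j \<subseteq> A)::real))))"
      by (simp add: sum_distrib_left algebra_simps)
    also have "\<dots> = (\<Sum>X\<in>Pow J. (-1) ^ card X * of_bool (E0 \<union> \<Union>(E ` X) \<subseteq> A))"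
    proof (rule sum.cong[OF refl])
      fix X assume "X \<in> Pow J"
      then have "finite X" using J finite_subset by blast
      then show "(-1) ^ card X * (of_bool (E0 \<subseteq> A) * (\<Prod>j\<in>X. (of_bool (E j \<subseteq> A)::real)))
          = (-1) ^ card X * of_bool (E0 \<union> \<Union>(E ` X) \<subseteq> A)"
        by (simp add: prod_of_bool) blast
    qed
    finally show ?thesis .
  qed
  have "(\<Sum>A\<in>Pow S. ?W A * (of_bool (E0 \<subseteq> A) * (\<Prod>j\<in>J. 1 - of_bool (E j \<subseteq> A))))
      = (\<Sum>A\<in>Pow S. \<Sum>X\<in>Pow J. (-1) ^ card X * (?W A * of_bool (E0 \<union> \<Union>(E ` X) \<subseteq> A)))"
    by (simp only: step sum_distrib_left mult.left_commute)
  also have "\<dots> = (\<Sum>X\<in>Pow J. (-1) ^ card X * (\<Sum>A\<in>Pow S. ?W A * of_bool (E0 \<union> \<Union>(E ` X) \<subseteq> A)))"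
    by (simp only: sum.swap[of _ "Pow S"] sum_distrib_left)
  also have "\<dots> = (\<Sum>X\<in>Pow J. (-1) ^ card X * ((\<Prod>e\<in>E0. \<pi> e) * (\<Prod>j\<in>X. \<Prod>e\<in>E j. \<pi> e)))"
  proof (rule sum.cong[OF refl])
    fix X assume X: "X \<in> Pow J"
    then have fX: "finite X" using J finite_subset by blast
    have sub: "E0 \<union> \<Union>(E ` X) \<subseteq> S" using X E0 EJ by auto
    have "(\<Sum>A\<in>Pow S. ?W A * of_bool (E0 \<union> \<Union>(E ` X) \<subseteq> A)) = (\<Prod>e\<in>E0 \<union> \<Union>(E ` X). \<pi> e)"
      by (rule sum_pow_subset[OF S sub])
    also have "\<dots> = (\<Prod>e\<in>E0. \<pi> e) * (\<Prod>e\<in>\<Union>(E ` X). \<pi> e)"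
      by (rule prod.union_disjoint) (use fin0 fX fin X d0 in auto)
    also have "(\<Prod>e\<in>\<Union>(E ` X). \<pi> e) = (\<Prod>j\<in>X. \<Prod>e\<in>E j. \<pi> e)"
      by (rule prod.UNION_disjoint) (use fX fin X dJ in blast)+
    finally show "(-1) ^ card X * (\<Sum>A\<in>Pow S. ?W A * of_bool (E0 \<union> \<Union>(E ` X) \<subseteq> A))
        = (-1) ^ card X * ((\<Prod>e\<in>E0. \<pi> e) * (\<Prod>j\<in>X. \<Prod>e\<in>E j. \<pi> e))" by simp
  qed
  also have "\<dots> = (\<Prod>e\<in>E0. \<pi> e) * (\<Prod>j\<in>J. 1 - (\<Prod>e\<in>E j. \<pi> e))"
    by (simp only: prod_one_minus[OF J] sum_distrib_left mult.left_commute)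
  finally show ?thesis .
qed



definition Tset :: "nat \<Rightarrow> nat \<Rightarrow> nat set \<Rightarrow> nat \<Rightarrow> nat set set" where
  "Tset n k P i = {t. t \<subseteq> {..<n} \<and> card t = k \<and> i \<in> t \<and> (\<forall>j\<in>t. j \<noteq> i \<longrightarrow> j \<notin> P)}"

definition Ed :: "nat \<Rightarrow> nat set \<Rightarrow> (nat \<times> nat) set" where
  "Ed j t = (\<lambda>l. (j, l)) ` (t - {j})"

definition Vt :: "nat \<Rightarrow> nat set \<Rightarrow> (nat \<Rightarrow> real) \<Rightarrow> (nat \<Rightarrow> real) \<Rightarrow> nat \<Rightarrow> nat set \<Rightarrow> real" where
  "Vt n P p q i t = (\<Prod>l\<in>t. p l) * (\<Prod>l\<in>t-{i}. q i * q l) *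
     (if i \<in> P then 1 else \<Prod>j\<in>{j. j < n \<and> j \<noteq> i}. (1 - (\<Prod>l\<in>t-{j}. q j * q l)))"

lemma finite_Tset: "finite (Tset n k P i)"
  by (rule finite_subset[of _ "Pow {..<n}"]) (auto simp: Tset_def)

lemma knows_iff: "t \<subseteq> D \<Longrightarrow> knows D L j t \<longleftrightarrow> Ed j t \<subseteq> L"
  unfolding knows_def learned_def Ed_def by auto

lemma rew_eq:
  assumes "D \<subseteq> {..<n}"
  shows "rewarded_techs n k P D L i = {t \<in> Tset n k P i. t \<subseteq> D \<and> Ed i t \<subseteq> L \<and>
            (i \<in> P \<or> (\<forall>j\<in>{j. j < n \<and> j \<noteq> i}. \<not> Ed j t \<subseteq> L))}"
proof -
  have "t \<in> rewarded_techs n k P D L i \<longleftrightarrow> t \<in> Tset n k P i \<and> t \<subseteq> D \<and> Ed i t \<subseteq> L \<and>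
            (i \<in> P \<or> (\<forall>j\<in>{j. j < n \<and> j \<noteq> i}. \<not> Ed j t \<subseteq> L))" for t
  proof (cases "t \<subseteq> D")
    case True
    then show ?thesis using assms unfolding rewarded_techs_def Tset_def
      by (auto simp: knows_iff[OF True])
  next
    case False
    then show ?thesis unfolding rewarded_techs_def by auto
  qed
  then show ?thesis by blast
qed

lemma card_rew:
  assumes "D \<subseteq> {..<n}"
  shows "real (card (rewarded_techs n k P D L i)) =
    (\<Sum>t\<in>Tset n k P i. of_bool (t \<subseteq> D) * (of_bool (Ed i t \<subseteq> L) *
        (if i \<in> P then 1 else \<Prod>j\<in>{j. j < n \<and> j \<noteq> i}. (1 - of_bool (Ed j t \<subseteq> L)))))"
proof -
  let ?Q = "\<lambda>t. t \<subseteq> D \<and> Ed i t \<subseteq> L \<and> (i \<in> P \<or> (\<forall>j\<in>{j. j < n \<and> j \<noteq> i}. \<not> Ed j t \<subseteq> L))"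
  have "(\<Sum>t\<in>Tset n k P i. of_bool (t \<subseteq> D) * (of_bool (Ed i t \<subseteq> L) *
        (if i \<in> P then 1 else \<Prod>j\<in>{j. j < n \<and> j \<noteq> i}. (1 - of_bool (Ed j t \<subseteq> L)))))
     = (\<Sum>t\<in>Tset n k P i. (of_bool (?Q t) :: real))"
  proof (rule sum.cong[OF refl])
    fix t
    have "(\<Prod>j\<in>{j. j < n \<and> j \<noteq> i}. (1 - of_bool (Ed j t \<subseteq> L)) :: real)
        = (\<Prod>j\<in>{j. j < n \<and> j \<noteq> i}. of_bool (\<not> Ed j t \<subseteq> L))"
      by (rule prod.cong) auto
    also have "\<dots> = of_bool (\<forall>j\<in>{j. j < n \<and> j \<noteq> i}. \<not> Ed j t \<subseteq> L)"
      by (rule prod_of_bool) auto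
    finally show "of_bool (t \<subseteq> D) * (of_bool (Ed i t \<subseteq> L) *
        (if i \<in> P then 1 else \<Prod>j\<in>{j. j < n \<and> j \<noteq> i}. (1 - of_bool (Ed j t \<subseteq> L))))
        = (of_bool (?Q t) :: real)" by auto
  qed
  also have "\<dots> = real (card (Tset n k P i \<inter> {t. ?Q t}))"
    using finite_Tset by simp
  also have "Tset n k P i \<inter> {t. ?Q t} = rewarded_techs n k P D L i"
    using rew_eq[OF assms] by auto
  finally show ?thesis by simp
qed

lemma sum_swap3:
  fixes f :: "'a \<Rightarrow> real" and g :: "'b \<Rightarrow> real"
  assumes "finite X" "finite Y" "finite T"
  shows "(\<Sum>x\<in>X. \<Sum>y\<in>Y. f x * g y * (\<Sum>t\<in>T. a t x * b t y))
       = (\<Sum>t\<in>T. (\<Sum>x\<in>X. f x * a t x) * (\<Sum>y\<in>Y. g y * b t y))"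
proof -
  have "(\<Sum>x\<in>X. \<Sum>y\<in>Y. f x * g y * (\<Sum>t\<in>T. a t x * b t y))
      = (\<Sum>x\<in>X. \<Sum>y\<in>Y. \<Sum>t\<in>T. (f x * a t x) * (g y * b t y))"
    by (simp add: sum_distrib_left mult_ac)
  also have "\<dots> = (\<Sum>x\<in>X. \<Sum>t\<in>T. \<Sum>y\<in>Y. (f x * a t x) * (g y * b t y))"
    by (rule sum.cong[OF refl], rule sum.swap)
  also have "\<dots> = (\<Sum>t\<in>T. \<Sum>x\<in>X. \<Sum>y\<in>Y. (f x * a t x) * (g y * b t y))"
    by (rule sum.swap)
  also have "\<dots> = (\<Sum>t\<in>T. (\<Sum>x\<in>X. f x * a t x) * (\<Sum>y\<in>Y. g y * b t y))"
    by (simp add: sum_product)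
  finally show ?thesis .
qed

lemma prod_Ed: "(\<Prod>e\<in>Ed j t. q (fst e) * q (snd e)) = (\<Prod>l\<in>t-{j}. q j * q l)"
  unfolding Ed_def by (subst prod.reindex) (auto simp: inj_on_def)

lemma finite_offdiag: "finite (offdiag n)"
  by (rule finite_subset[of _ "{..<n} \<times> {..<n}"]) (auto simp: offdiag_def)

lemma payoff_formula:
  assumes i: "i < n"
  shows "payoff n k c P p q i = (\<Sum>t\<in>Tset n k P i. Vt n P p q i t) - c (p i)"
proof -
  define WD where "WD D = (\<Prod>i<n. if i \<in> D then p i else 1 - p i)" for D
  define \<pi> where "\<pi> e = q (fst e) * q (snd e)" for e :: "nat \<times> nat"
  define WL where "WL L = (\<Prod>e\<in>offdiag n. if e \<in> L then \<pi> e else 1 - \<pi> e)" for L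
  define J where "J = {j. j < n \<and> j \<noteq> i}"
  define a where "a t D = (of_bool (t \<subseteq> D) :: real)" for t D :: "nat set"
  define bb where "bb t L = (of_bool (Ed i t \<subseteq> L) *
        (if i \<in> P then 1 else \<Prod>j\<in>{j. j < n \<and> j \<noteq> i}. (1 - of_bool (Ed j t \<subseteq> L))) :: real)" for t L
  have ow: "outcome_weight n p q D L = WD D * WL L" for D L
    unfolding outcome_weight_def WD_def WL_def \<pi>_def by simp
  have "(\<Sum>D\<in>Pow {..<n}. \<Sum>L\<in>Pow (offdiag n).
        outcome_weight n p q D L * real (card (rewarded_techs n k P D L i)))
      = (\<Sum>D\<in>Pow {..<n}. \<Sum>L\<in>Pow (offdiag n). WD D * WL L * (\<Sum>t\<in>Tset n k P i. a t D * bb t L))"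
    by (intro sum.cong refl) (simp add: ow card_rew a_def bb_def J_def)
  also have "\<dots> = (\<Sum>t\<in>Tset n k P i. (\<Sum>D\<in>Pow {..<n}. WD D * a t D) * (\<Sum>L\<in>Pow (offdiag n). WL L * bb t L))"
    by (rule sum_swap3) (auto simp: finite_Tset finite_offdiag)
  also have "\<dots> = (\<Sum>t\<in>Tset n k P i. Vt n P p q i t)"
  proof (rule sum.cong[OF refl])
    fix t assume t: "t \<in> Tset n k P i"
    then have tn: "t \<subseteq> {..<n}" and it: "i \<in> t" by (auto simp: Tset_def)
    have 1: "(\<Sum>D\<in>Pow {..<n}. WD D * a t D) = (\<Prod>l\<in>t. p l)"
      unfolding WD_def a_def by (rule sum_pow_subset[OF _ tn]) simp
    have Edsub: "Ed j t \<subseteq> offdiag n" if "j < n" for j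
      using that tn by (auto simp: Ed_def offdiag_def)
    have 2: "(\<Sum>L\<in>Pow (offdiag n). WL L * bb t L) = (\<Prod>l\<in>t-{i}. q i * q l) *
        (if i \<in> P then 1 else \<Prod>j\<in>J. (1 - (\<Prod>l\<in>t-{j}. q j * q l)))"
    proof (cases "i \<in> P")
      case True
      have "(\<Sum>L\<in>Pow (offdiag n). WL L * bb t L) = (\<Sum>L\<in>Pow (offdiag n). WL L * of_bool (Ed i t \<subseteq> L))"
        using True by (simp add: bb_def)
      also have "\<dots> = (\<Prod>e\<in>Ed i t. \<pi> e)"
        unfolding WL_def by (rule sum_pow_subset[OF finite_offdiag Edsub[OF i]])
      finally show ?thesis using True by (simp add: \<pi>_def prod_Ed)
    next
      case False
      have "(\<Sum>L\<in>Pow (offdiag n). WL L * bb t L) = (\<Sum>L\<in>Pow (offdiag n). WL L *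
           (of_bool (Ed i t \<subseteq> L) * (\<Prod>j\<in>J. (1 - of_bool (Ed j t \<subseteq> L)))))"
        using False by (simp add: bb_def J_def)
      also have "\<dots> = (\<Prod>e\<in>Ed i t. \<pi> e) * (\<Prod>j\<in>J. 1 - (\<Prod>e\<in>Ed j t. \<pi> e))"
        unfolding WL_def
        by (rule sum_pow_excl[OF finite_offdiag Edsub[OF i]])
           (use tn in \<open>auto simp: J_def Ed_def offdiag_def\<close>)
      finally show ?thesis using False by (simp add: \<pi>_def prod_Ed)
    qed
    show "(\<Sum>D\<in>Pow {..<n}. WD D * a t D) * (\<Sum>L\<in>Pow (offdiag n). WL L * bb t L) = Vt n P p q i t"
      unfolding 1 2 Vt_def J_def by simp
  qed
  finally show ?thesis unfolding payoff_def by simp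
qed



lemma Vt_unpat:
  fixes p0 q0 p1 q1 pp x :: real and P :: "nat set"
  defines "p \<equiv> (\<lambda>j. if j \<in> P then p1 else p0)" and "q \<equiv> (\<lambda>j. if j \<in> P then q1 else q0)"
  assumes P: "P \<subseteq> {..<n}" and i: "i < n" "i \<notin> P" and t: "t \<in> Tset n k P i" and k: "k \<ge> 2"
  shows "Vt n P (p(i:=pp)) (q(i:=x)) i t = pp * p0^(k-1) * (x*q0)^(k-1)
     * (1 - x*(q0*(q0*q0)^(k-2)))^(k-1) * (1 - x*(q0*(q0*q0)^(k-1)))^(card ({..<n} - P) - k)
     * (1 - x*(q1*(q1*q0)^(k-1)))^(card P)"
proof -
  let ?p = "p(i:=pp)" and ?q = "q(i:=x)"
  define s where "s = t - {i}"
  define U where "U = {..<n} - P"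
  have tn: "t \<subseteq> {..<n}" and ct: "card t = k" and it: "i \<in> t" and tP: "\<forall>j\<in>t. j \<noteq> i \<longrightarrow> j \<notin> P"
    using t by (auto simp: Tset_def)
  have ft: "finite t" using tn finite_subset by blast
  have fs: "finite s" using ft s_def by auto
  have cs: "card s = k - 1" using ct it ft by (simp add: s_def)
  have ts: "t = insert i s" "i \<notin> s" using it s_def by auto
  have sU: "s \<subseteq> U" using tn tP s_def U_def by auto
  have ps: "?p l = p0" "?q l = q0" if "l \<in> s" for l using that sU ts(2) by (auto simp: p_def q_def U_def)
  have 1: "(\<Prod>l\<in>t. ?p l) = pp * p0^(k-1)"
  proof -
    have "(\<Prod>l\<in>t. ?p l) = ?p i * (\<Prod>l\<in>s. ?p l)" using ts fs by simp
    also have "(\<Prod>l\<in>s. ?p l) = (\<Prod>l\<in>s. p0)" using ps by (intro prod.cong) auto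
    finally show ?thesis using cs by simp
  qed
  have 2: "(\<Prod>l\<in>t-{i}. ?q i * ?q l) = (x*q0)^(k-1)"
  proof -
    have "(\<Prod>l\<in>t-{i}. ?q i * ?q l) = (\<Prod>l\<in>s. x * q0)" using ps s_def by (intro prod.cong) auto
    then show ?thesis using cs by simp
  qed
  define J where "J = {j. j < n \<and> j \<noteq> i}"
  define F where "F j = 1 - (\<Prod>l\<in>t-{j}. ?q j * ?q l)" for j
  have JJ: "J = s \<union> ((U - t) \<union> P)" using sU ts tn i P unfolding J_def U_def by auto
  have fU: "finite U" "finite P" using P by (auto simp: U_def finite_subset)
  have 3: "(\<Prod>j\<in>J. F j) = (\<Prod>j\<in>s. F j) * ((\<Prod>j\<in>U-t. F j) * (\<Prod>j\<in>P. F j))"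
  proof -
    have a: "prod F ((U-t) \<union> P) = prod F (U-t) * prod F P"
      by (rule prod.union_disjoint) (use fU in \<open>auto simp: U_def\<close>)
    have b: "prod F (s \<union> ((U-t) \<union> P)) = prod F s * prod F ((U-t) \<union> P)"
      by (rule prod.union_disjoint) (use fU fs sU ts in \<open>auto simp: U_def\<close>)
    show ?thesis unfolding JJ b a ..
  qed
  have Fs: "F j = 1 - x*(q0*(q0*q0)^(k-2))" if j: "j \<in> s" for j
  proof -
    have e: "t - {j} = insert i (s - {j})" "i \<notin> s - {j}" using ts j by auto
    have "(\<Prod>l\<in>t-{j}. ?q j * ?q l) = ?q j * ?q i * (\<Prod>l\<in>s-{j}. ?q j * ?q l)"
      unfolding e(1) using e(2) fs by simp
    also have "(\<Prod>l\<in>s-{j}. ?q j * ?q l) = (\<Prod>l\<in>s-{j}. q0 * q0)"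
      using ps j by (intro prod.cong) auto
    also have "\<dots> = (q0*q0)^(k-2)" using cs j fs by (simp add: numeral_2_eq_2)
    finally show ?thesis unfolding F_def using ps(2)[OF j] by (simp add: mult_ac)
  qed
  have qt: "(\<Prod>l\<in>t. c * ?q l) = c * x * (c*q0)^(k-1)" for c
  proof -
    have "(\<Prod>l\<in>t. c * ?q l) = c * ?q i * (\<Prod>l\<in>s. c * ?q l)" using ts fs by simp
    also have "(\<Prod>l\<in>s. c * ?q l) = (\<Prod>l\<in>s. c * q0)" using ps by (intro prod.cong) auto
    finally show ?thesis using cs by simp
  qed
  have FU: "F j = 1 - x*(q0*(q0*q0)^(k-1))" if j: "j \<in> U - t" for j
  proof -
    have "t - {j} = t" "?q j = q0" using j ts by (auto simp: q_def U_def)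
    then show ?thesis unfolding F_def using qt[of q0] by (simp add: mult_ac)
  qed
  have FP: "F j = 1 - x*(q1*(q1*q0)^(k-1))" if j: "j \<in> P" for j
  proof -
    have "t - {j} = t" "?q j = q1" using j ts tP i by (auto simp: q_def)
    then show ?thesis unfolding F_def using qt[of q1] by (simp add: mult_ac)
  qed
  have cU: "card (U - t) = card ({..<n} - P) - k"
    using tn tP it ct ft fU i by (subst card_Diff_subset) (auto simp: U_def)
  have 4: "(\<Prod>j\<in>J. F j) = (1 - x*(q0*(q0*q0)^(k-2)))^(k-1) * ((1 - x*(q0*(q0*q0)^(k-1)))^(card ({..<n} - P) - k)
     * (1 - x*(q1*(q1*q0)^(k-1)))^(card P))"
    unfolding 3 using Fs FU FP cs cU by simp
  show ?thesis
    unfolding Vt_def using i 1 2 4 by (simp add: J_def F_def mult_ac)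
qed

lemma Vt_pat:
  fixes p0 q0 p1 q1 pp x :: real and P :: "nat set"
  defines "p \<equiv> (\<lambda>j. if j \<in> P then p1 else p0)" and "q \<equiv> (\<lambda>j. if j \<in> P then q1 else q0)"
  assumes i: "i \<in> P" and t: "t \<in> Tset n k P i" and k: "k \<ge> 2"
  shows "Vt n P (p(i:=pp)) (q(i:=x)) i t = pp * p0^(k-1) * (x*q0)^(k-1)"
proof -
  let ?p = "p(i:=pp)" and ?q = "q(i:=x)"
  define s where "s = t - {i}"
  have tn: "t \<subseteq> {..<n}" and ct: "card t = k" and it: "i \<in> t" and tP: "\<forall>j\<in>t. j \<noteq> i \<longrightarrow> j \<notin> P"
    using t by (auto simp: Tset_def)
  have ft: "finite t" using tn finite_subset by blast
  have fs: "finite s" using ft s_def by auto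
  have cs: "card s = k - 1" using ct it ft by (simp add: s_def)
  have ts: "t = insert i s" "i \<notin> s" using it s_def by auto
  have ps: "?p l = p0" "?q l = q0" if "l \<in> s" for l using that tP ts(2) by (auto simp: p_def q_def s_def)
  have 1: "(\<Prod>l\<in>t. ?p l) = pp * p0^(k-1)"
  proof -
    have "(\<Prod>l\<in>t. ?p l) = ?p i * (\<Prod>l\<in>s. ?p l)" using ts fs by simp
    also have "(\<Prod>l\<in>s. ?p l) = (\<Prod>l\<in>s. p0)" using ps by (intro prod.cong) auto
    finally show ?thesis using cs by simp
  qed
  have 2: "(\<Prod>l\<in>t-{i}. ?q i * ?q l) = (x*q0)^(k-1)"
  proof -
    have "(\<Prod>l\<in>t-{i}. ?q i * ?q l) = (\<Prod>l\<in>s. x * q0)" using ps s_def by (intro prod.cong) auto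
    then show ?thesis using cs by simp
  qed
  show ?thesis unfolding Vt_def using i 1 2 by simp
qed



lemma foc:
  fixes q0 \<alpha> \<beta> \<gamma> :: real and K N m :: nat
  assumes q0: "0 < q0" "q0 < 1" and ab: "\<alpha> < 1" "\<beta> < 1" "\<gamma> < 1" "0 \<le> \<alpha>" "0 \<le> \<beta>" "0 \<le> \<gamma>"
    and max: "\<And>x. 0 < x \<Longrightarrow> x < 1 \<Longrightarrow> x^K * (1 - x*\<alpha>)^K * (1 - x*\<beta>)^N * (1 - x*\<gamma>)^m
              \<le> q0^K * (1 - q0*\<alpha>)^K * (1 - q0*\<beta>)^N * (1 - q0*\<gamma>)^m"
  shows "K / q0 = K*\<alpha>/(1 - q0*\<alpha>) + N*\<beta>/(1 - q0*\<beta>) + m*\<gamma>/(1 - q0*\<gamma>)"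
proof -
  define h where "h x = K * ln x + K * ln (1 - x*\<alpha>) + N * ln (1 - x*\<beta>) + m * ln (1 - x*\<gamma>)" for x
  have pos: "0 < 1 - x*\<alpha>" "0 < 1 - x*\<beta>" "0 < 1 - x*\<gamma>" if "0 < x" "x < 1" for x
  proof -
    have "x*\<alpha> < 1" using that ab mult_right_mono[of x 1 \<alpha>] by auto
    moreover have "x*\<beta> < 1" using that ab mult_right_mono[of x 1 \<beta>] by auto
    moreover have "x*\<gamma> < 1" using that ab mult_right_mono[of x 1 \<gamma>] by auto
    ultimately show "0 < 1 - x*\<alpha>" "0 < 1 - x*\<beta>" "0 < 1 - x*\<gamma>" by auto
  qed
  have hln: "h x = ln (x^K * (1 - x*\<alpha>)^K * (1 - x*\<beta>)^N * (1 - x*\<gamma>)^m)" if "0 < x" "x < 1" for x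
    using pos[OF that] that by (simp add: h_def ln_mult ln_realpow)
  have loc: "h x \<le> h q0" if "\<bar>q0 - x\<bar> < min q0 (1 - q0)" for x
  proof -
    have x: "0 < x" "x < 1" using that by auto
    show ?thesis unfolding hln[OF x] hln[OF q0]
      using max[OF x] pos[OF x] x pos[OF q0] q0 by (subst ln_le_cancel_iff) auto
  qed
  have der: "DERIV h q0 :> (K / q0 - K*\<alpha>/(1 - q0*\<alpha>) - N*\<beta>/(1 - q0*\<beta>) - m*\<gamma>/(1 - q0*\<gamma>))"
    unfolding h_def using pos[OF q0] q0
    apply (intro derivative_eq_intros refl)
    apply simp_all
    apply (simp add: field_simps)
    done
  have "K / q0 - K*\<alpha>/(1 - q0*\<alpha>) - N*\<beta>/(1 - q0*\<beta>) - m*\<gamma>/(1 - q0*\<gamma>) = 0"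
    by (rule DERIV_local_max[OF der, of "min q0 (1 - q0)"]) (use q0 loc in auto)
  then show ?thesis by simp
qed



lemma Tset_ne_unpat:
  assumes P: "P \<subseteq> {..<n}" and i: "i < n" "i \<notin> P" and cU: "card ({..<n} - P) \<ge> k" and k: "k \<ge> 1"
  shows "Tset n k P i \<noteq> {}"
proof -
  have "card ({..<n} - P - {i}) = card ({..<n} - P) - 1" using i by simp
  then have "k - 1 \<le> card ({..<n} - P - {i})" using cU by simp
  then obtain s where s: "s \<subseteq> {..<n} - P - {i}" "card s = k - 1" "finite s"
    by (rule obtain_subset_with_card_n)
  have "i \<notin> s" using s by auto
  then have "card (insert i s) = k" using s k by simp
  then have "insert i s \<in> Tset n k P i" using s i k by (auto simp: Tset_def)
  then show ?thesis by blast
qed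

lemma Tset_ne_pat:
  assumes P: "P \<subseteq> {..<n}" and i: "i \<in> P" and cU: "card ({..<n} - P) \<ge> k - 1" and k: "k \<ge> 1"
  shows "Tset n k P i \<noteq> {}"
proof -
  obtain s where s: "s \<subseteq> {..<n} - P" "card s = k - 1" "finite s"
    using cU by (rule obtain_subset_with_card_n)
  have "i \<notin> s" using s i by auto
  then have "insert i s \<in> Tset n k P i" using s i k P by (auto simp: Tset_def)
  then show ?thesis by blast
qed

lemma eq_consequences:
  fixes k n :: nat and P :: "nat set" and c :: "real \<Rightarrow> real" and p0 q0 p1 q1 :: real
  assumes k: "k > 2" and P: "P \<subseteq> {..<n}" and cP: "card P \<ge> 1" and cU: "card ({..<n} - P) \<ge> k"
    and c0: "c 0 = 0" and cmono: "strict_mono_on {0..<1} c"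
    and eq: "symmetric_investment_equilibrium n k c P p0 q0 p1 q1"
  shows "0 < q0 \<and> q0 < 1 \<and> q1 = 1 \<and>
    real (k-1) / q0 = real (k-1) * (q0*(q0*q0)^(k-2)) / (1 - q0*(q0*(q0*q0)^(k-2)))
      + real (card ({..<n} - P) - k) * (q0*(q0*q0)^(k-1)) / (1 - q0*(q0*(q0*q0)^(k-1)))
      + real (card P) * (q1*(q1*q0)^(k-1)) / (1 - q0*(q1*(q1*q0)^(k-1)))"
proof -
  define p where "p = (\<lambda>j. if j \<in> P then p1 else p0)"
  define q where "q = (\<lambda>j. if j \<in> P then q1 else q0)"
  define N where "N = card ({..<n} - P) - k"
  define m where "m = card P"
  define \<alpha> where "\<alpha> = q0*(q0*q0)^(k-2)"
  define \<beta> where "\<beta> = q0*(q0*q0)^(k-1)"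
  define \<gamma> where "\<gamma> = q1*(q1*q0)^(k-1)"
  have bnd: "\<And>i. i < n \<Longrightarrow> 0 \<le> p i \<and> p i < 1 \<and> 0 \<le> q i \<and> q i \<le> 1"
    and dev: "\<And>i p' q'. i < n \<Longrightarrow> 0 \<le> p' \<Longrightarrow> p' < 1 \<Longrightarrow> 0 \<le> q' \<Longrightarrow> q' \<le> 1 \<Longrightarrow>
        payoff n k c P (p(i := p')) (q(i := q')) i \<le> payoff n k c P p q i"
    and ppos: "\<And>i. i < n \<Longrightarrow> p i > 0"
  proof -
    have E: "is_equilibrium n k c P p q" and pp: "\<forall>i<n. p i > 0"
      using eq unfolding symmetric_investment_equilibrium_def Let_def p_def q_def by auto
    show "\<And>i. i < n \<Longrightarrow> 0 \<le> p i \<and> p i < 1 \<and> 0 \<le> q i \<and> q i \<le> 1"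
      using E unfolding is_equilibrium_def by blast
    show "\<And>i p' q'. i < n \<Longrightarrow> 0 \<le> p' \<Longrightarrow> p' < 1 \<Longrightarrow> 0 \<le> q' \<Longrightarrow> q' \<le> 1 \<Longrightarrow>
        payoff n k c P (p(i := p')) (q(i := q')) i \<le> payoff n k c P p q i"
      using E unfolding is_equilibrium_def by blast
    show "\<And>i. i < n \<Longrightarrow> p i > 0" using pp by blast
  qed
  obtain i where i: "i < n" "i \<notin> P"
  proof -
    have "card ({..<n} - P) > 0" using cU k by linarith
    then have "{..<n} - P \<noteq> {}" by (metis card.empty less_irrefl)
    then show ?thesis using that by blast
  qed
  have "P \<noteq> {}" using cP by auto
  then obtain i1 where i1: "i1 \<in> P" by blast
  have i1n: "i1 < n" using i1 P by auto
  have b0: "0 \<le> p0" "p0 < 1" "0 \<le> q0" "q0 \<le> 1" "0 < p0" using bnd[OF i(1)] ppos[OF i(1)] i by (auto simp: p_def q_def)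
  have b1: "0 \<le> p1" "p1 < 1" "0 \<le> q1" "q1 \<le> 1" "0 < p1" using bnd[OF i1n] ppos[OF i1n] i1 by (auto simp: p_def q_def)
  define T where "T = Tset n k P i"
  define \<Phi> where "\<Phi> pp x = real (card T) * (pp * p0^(k-1) * (x*q0)^(k-1) * (1 - x*\<alpha>)^(k-1) * (1 - x*\<beta>)^N * (1 - x*\<gamma>)^m)" for pp x
  have pay: "payoff n k c P (p(i := pp)) (q(i := x)) i = \<Phi> pp x - c pp" for pp x
  proof -
    have "payoff n k c P (p(i := pp)) (q(i := x)) i = (\<Sum>t\<in>T. Vt n P (p(i := pp)) (q(i := x)) i t) - c pp"
      using payoff_formula[OF i(1)] by (simp add: T_def)
    also have "(\<Sum>t\<in>T. Vt n P (p(i := pp)) (q(i := x)) i t) = (\<Sum>t\<in>T. pp * p0^(k-1) * (x*q0)^(k-1) * (1 - x*\<alpha>)^(k-1) * (1 - x*\<beta>)^N * (1 - x*\<gamma>)^m)"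
      by (rule sum.cong[OF refl]) (unfold p_def q_def \<alpha>_def \<beta>_def \<gamma>_def N_def m_def T_def, rule Vt_unpat[OF P i], use k in auto)
    also have "\<dots> = \<Phi> pp x" by (simp add: \<Phi>_def)
    finally show ?thesis .
  qed
  have p_triv: "p(i := p0) = p" "q(i := q0) = q" using i by (auto simp: p_def q_def)
  have dev': "\<Phi> pp x - c pp \<le> \<Phi> p0 q0 - c p0" if "0 \<le> pp" "pp < 1" "0 \<le> x" "x \<le> 1" for pp x
    using dev[OF i(1) that] pay[of pp x] pay[of p0 q0] p_triv by simp
  have "c 0 < c p0" using cmono b0 unfolding strict_mono_on_def by auto
  moreover have "\<Phi> 0 q0 = 0" by (simp add: \<Phi>_def)
  ultimately have Phipos: "\<Phi> p0 q0 > 0" using dev'[of 0 q0] b0 c0 by simp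
  have k1: "k - 1 > 0" using k by simp
  have q0pos: "q0 > 0"
  proof (rule ccontr)
    assume "\<not> q0 > 0" then have "q0 = 0" using b0 by simp
    then have "\<Phi> p0 q0 = 0" using k1 by (simp add: \<Phi>_def)
    then show False using Phipos by simp
  qed
  have q0lt: "q0 < 1"
  proof (rule ccontr)
    assume "\<not> q0 < 1" then have "q0 = 1" using b0 by simp
    then have "\<Phi> p0 q0 = 0" using k1 by (simp add: \<Phi>_def \<alpha>_def)
    then show False using Phipos by simp
  qed
  define T1 where "T1 = Tset n k P i1"
  have T1ne: "card T1 > 0"
    using Tset_ne_pat[OF P i1, of k] cU k finite_Tset unfolding T1_def
    by (simp add: card_gt_0_iff)
  have pay1: "payoff n k c P (p(i1 := pp)) (q(i1 := x)) i1 = real (card T1) * (pp * p0^(k-1) * (x*q0)^(k-1)) - c pp" for pp x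
  proof -
    have "payoff n k c P (p(i1 := pp)) (q(i1 := x)) i1 = (\<Sum>t\<in>T1. Vt n P (p(i1 := pp)) (q(i1 := x)) i1 t) - c pp"
      using payoff_formula[OF i1n] by (simp add: T1_def)
    also have "(\<Sum>t\<in>T1. Vt n P (p(i1 := pp)) (q(i1 := x)) i1 t) = (\<Sum>t\<in>T1. pp * p0^(k-1) * (x*q0)^(k-1))"
      by (rule sum.cong[OF refl]) (unfold p_def q_def T1_def, rule Vt_pat[OF i1], use k in auto)
    also have "\<dots> = real (card T1) * (pp * p0^(k-1) * (x*q0)^(k-1))" by simp
    finally show ?thesis .
  qed
  have p_triv1: "p(i1 := p1) = p" "q(i1 := q1) = q" using i1 by (auto simp: p_def q_def)
  have "real (card T1) * (p1 * p0^(k-1) * (1*q0)^(k-1)) \<le> real (card T1) * (p1 * p0^(k-1) * (q1*q0)^(k-1))"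
    using dev[OF i1n b1(1,2), of 1] pay1[of p1 1] pay1[of p1 q1] p_triv1 by simp
  then have "q0^(k-1) \<le> q1^(k-1) * q0^(k-1)"
    using T1ne b0 b1 by (simp add: power_mult_distrib)
  then have "1 \<le> q1^(k-1)" using q0pos by simp
  then have q1: "q1 = 1"
    using power_strict_mono[of q1 1 "k-1"] b1 k1 by (cases "q1 < 1") auto
  have Tne: "card T > 0"
    using Tset_ne_unpat[OF P i cU] k finite_Tset unfolding T_def by (simp add: card_gt_0_iff)
  have al: "\<alpha> < 1" "0 \<le> \<alpha>"
  proof -
    have qq: "q0*q0 \<le> 1" using mult_le_one[of q0 q0] q0pos q0lt by simp
    have "(q0*q0)^(k-2) \<le> 1" using qq q0pos by (intro power_le_one) auto
    then have "q0 * (q0*q0)^(k-2) \<le> q0 * 1" using q0pos by (intro mult_left_mono) auto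
    then have "\<alpha> \<le> q0" unfolding \<alpha>_def by simp
    then show "\<alpha> < 1" using q0lt by simp
    show "0 \<le> \<alpha>" unfolding \<alpha>_def using q0pos by simp
  qed
  have be: "\<beta> < 1" "0 \<le> \<beta>"
  proof -
    have qq: "q0*q0 \<le> 1" using mult_le_one[of q0 q0] q0pos q0lt by simp
    have "(q0*q0)^(k-1) \<le> 1" using qq q0pos by (intro power_le_one) auto
    then have "q0 * (q0*q0)^(k-1) \<le> q0 * 1" using q0pos by (intro mult_left_mono) auto
    then have "\<beta> \<le> q0" unfolding \<beta>_def by simp
    then show "\<beta> < 1" using q0lt by simp
    show "0 \<le> \<beta>" unfolding \<beta>_def using q0pos by simp
  qed
  have ga: "\<gamma> < 1" "0 \<le> \<gamma>"
  proof -
    have "\<gamma> = q0^(k-1)" unfolding \<gamma>_def q1 by simp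
    then show "\<gamma> < 1" using power_strict_mono[of q0 1 "k-1"] q0pos q0lt k1 by simp
    show "0 \<le> \<gamma>" unfolding \<gamma>_def q1 using q0pos by simp
  qed
  define C0 where "C0 = real (card T) * p0 * p0^(k-1) * q0^(k-1)"
  have C0pos: "C0 > 0" unfolding C0_def using Tne b0 q0pos by simp
  have PhiC: "\<Phi> p0 x = C0 * (x^(k-1) * (1 - x*\<alpha>)^(k-1) * (1 - x*\<beta>)^N * (1 - x*\<gamma>)^m)" for x
    unfolding \<Phi>_def C0_def by (simp add: power_mult_distrib mult_ac)
  have mx: "x^(k-1) * (1 - x*\<alpha>)^(k-1) * (1 - x*\<beta>)^N * (1 - x*\<gamma>)^m
        \<le> q0^(k-1) * (1 - q0*\<alpha>)^(k-1) * (1 - q0*\<beta>)^N * (1 - q0*\<gamma>)^m" if "0 < x" "x < 1" for x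
  proof -
    have "\<Phi> p0 x \<le> \<Phi> p0 q0" using dev'[of p0 x] that b0 by simp
    then show ?thesis unfolding PhiC using C0pos by simp
  qed
  have "real (k-1) / q0 = real (k-1)*\<alpha>/(1 - q0*\<alpha>) + N*\<beta>/(1 - q0*\<beta>) + m*\<gamma>/(1 - q0*\<gamma>)"
    by (rule foc[OF q0pos q0lt al(1) be(1) ga(1) al(2) be(2) ga(2) mx])
  then show ?thesis using q0pos q0lt q1 unfolding \<alpha>_def \<beta>_def \<gamma>_def N_def m_def by simp
qed



lemma asym:
  fixes q mm NN :: "nat \<Rightarrow> real" and K b :: real and k :: nat
  assumes k: "k \<ge> 2" and K: "K > 0" and b: "b > 0"
    and lim: "(\<lambda>n. mm n / real n) \<longlonglongrightarrow> b"
    and ev: "\<forall>\<^sub>F n in sequentially. 0 < q n \<and> q n < 1 \<and> 0 \<le> NN n \<and> NN n \<le> real n \<and> 0 \<le> mm n \<and>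
      K = K * q n^(2*k-2)/(1 - q n^(2*k-2)) + NN n * (q n^k)^2/(1 - (q n^k)^2) + mm n * q n^k/(1 - q n^k)"
  shows "(\<lambda>n. real n * q n^k) \<longlonglongrightarrow> K / b"
proof -
  define z where "z n = q n ^ k" for n
  define a where "a n = q n ^ (2*k-2)" for n
  define t1 where "t1 n = K * a n / (1 - a n)" for n
  define t2 where "t2 n = NN n * (z n)^2/(1 - (z n)^2)" for n
  define t3 where "t3 n = mm n * z n/(1 - z n)" for n
  have evm: "\<forall>\<^sub>F n in sequentially. mm n / real n > b/2"
    by (rule order_tendstoD(1)[OF lim]) (use b in simp)
  have ev2: "\<forall>\<^sub>F n in sequentially. 0 < z n \<and> z n < 1 \<and> 0 < a n \<and> a n \<le> z n \<and> 0 \<le> NN n \<and> NN n \<le> real n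
      \<and> mm n > 0 \<and> n > 0 \<and> K = t1 n + t2 n + t3 n"
    using ev evm eventually_gt_at_top[of 0]
  proof eventually_elim
    case (elim n)
    then have q: "0 < q n" "q n < 1" by auto
    have "mm n / real n > 0" using elim b by (smt (verit) half_gt_zero)
    then have "mm n > 0" using elim by (simp add: zero_less_divide_iff)
    moreover have "z n < 1" unfolding z_def using q k by (simp add: power_less_one_iff)
    moreover have "a n \<le> z n" unfolding a_def z_def using q k by (intro power_decreasing) auto
    ultimately show ?case using elim q by (auto simp: z_def a_def t1_def t2_def t3_def)
  qed
  have mtop: "filterlim mm at_top sequentially"
  proof -
    have 1: "filterlim (\<lambda>n. (mm n / real n) * real n) at_top sequentially"
      by (rule filterlim_tendsto_pos_mult_at_top[OF lim b filterlim_real_sequentially])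
    have "\<forall>\<^sub>F n in sequentially. (mm n / real n) * real n = mm n"
      using eventually_gt_at_top[of 0] by eventually_elim auto
    then have "filterlim (\<lambda>n. (mm n / real n) * real n) at_top sequentially = filterlim mm at_top sequentially"
      by (rule filterlim_cong[OF refl refl])
    then show ?thesis using 1 by simp
  qed
  have nm: "(\<lambda>n. real n / mm n) \<longlonglongrightarrow> 1 / b"
  proof -
    have "(\<lambda>n. inverse (mm n / real n)) \<longlonglongrightarrow> inverse b" using lim b by (intro tendsto_inverse) auto
    then show ?thesis by (simp add: inverse_eq_divide)
  qed
  have t3le: "\<forall>\<^sub>F n in sequentially. mm n * z n \<le> K"
    using ev2
  proof eventually_elim
    case (elim n)
    have "t2 n \<ge> 0" using elim unfolding t2_def by (intro divide_nonneg_pos mult_nonneg_nonneg) (auto simp: power_less_one_iff)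
    moreover have "t1 n \<ge> 0" using elim K unfolding t1_def by auto
    moreover have "mm n * z n \<le> t3 n" using elim unfolding t3_def
      by (simp add: field_simps mult_le_cancel_left_pos)
    ultimately show ?case using elim by linarith
  qed
  have z0: "z \<longlonglongrightarrow> 0"
  proof (rule tendsto_sandwich[of "\<lambda>_. 0" _ _ "\<lambda>n. K / mm n"])
    show "\<forall>\<^sub>F n in sequentially. 0 \<le> z n" using ev2 by eventually_elim auto
    show "\<forall>\<^sub>F n in sequentially. z n \<le> K / mm n" using ev2 t3le by eventually_elim (auto simp: field_simps)
    show "(\<lambda>n. K / mm n) \<longlonglongrightarrow> 0" by (rule tendsto_divide_0[OF tendsto_const mtop[THEN filterlim_at_top_imp_at_infinity]])
  qed auto
  have t1lim: "t1 \<longlonglongrightarrow> 0"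
  proof (rule tendsto_sandwich[of "\<lambda>_. 0" _ _ "\<lambda>n. K * z n / (1 - z n)"])
    show "\<forall>\<^sub>F n in sequentially. 0 \<le> t1 n" using ev2 by eventually_elim (use K in \<open>auto simp: t1_def\<close>)
    show "\<forall>\<^sub>F n in sequentially. t1 n \<le> K * z n / (1 - z n)" using ev2
    proof eventually_elim
      case (elim n)
      then show ?case unfolding t1_def using K by (intro frac_le mult_left_mono) auto
    qed
    show "(\<lambda>n. K * z n / (1 - z n)) \<longlonglongrightarrow> 0" using tendsto_intros(1-10) z0
      by (auto intro!: tendsto_eq_intros z0)
  qed auto
  have t2lim: "t2 \<longlonglongrightarrow> 0"
  proof (rule tendsto_sandwich[of "\<lambda>_. 0" _ _ "\<lambda>n. K * (real n / mm n) * (z n / (1 - (z n)^2))"])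
    show "\<forall>\<^sub>F n in sequentially. 0 \<le> t2 n" using ev2
      by eventually_elim (auto simp: t2_def power_less_one_iff intro!: divide_nonneg_pos)
    show "\<forall>\<^sub>F n in sequentially. t2 n \<le> K * (real n / mm n) * (z n / (1 - (z n)^2))" using ev2 t3le
    proof eventually_elim
      case (elim n)
      have d: "1 - (z n)^2 > 0" using elim by (simp add: power_less_one_iff)
      have "NN n * z n \<le> real n * z n" using elim by (intro mult_right_mono) auto
      also have "real n * z n = (real n / mm n) * (mm n * z n)" using elim by simp
      also have "\<dots> \<le> (real n / mm n) * K" using elim by (intro mult_left_mono) auto
      also have "\<dots> = K * (real n / mm n)" by simp
      finally have "NN n * z n \<le> K * (real n / mm n)" .
      then have "NN n * z n * (z n / (1 - (z n)^2)) \<le> K * (real n / mm n) * (z n / (1 - (z n)^2))"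
        using elim d by (intro mult_right_mono) auto
      then show ?case unfolding t2_def by (simp add: power2_eq_square mult_ac)
    qed
    show "(\<lambda>n. K * (real n / mm n) * (z n / (1 - (z n)^2))) \<longlonglongrightarrow> 0"
    proof -
      have "(\<lambda>n. K * (real n / mm n) * (z n / (1 - (z n)^2))) \<longlonglongrightarrow> K * (1/b) * (0 / (1 - 0^2))"
        by (intro tendsto_mult tendsto_const nm tendsto_divide z0 tendsto_diff tendsto_power) simp
      then show ?thesis by simp
    qed
  qed auto
  have t3lim: "t3 \<longlonglongrightarrow> K"
  proof -
    have "(\<lambda>n. K - t1 n - t2 n) \<longlonglongrightarrow> K - 0 - 0" using t1lim t2lim by (intro tendsto_intros)
    moreover have "\<forall>\<^sub>F n in sequentially. K - t1 n - t2 n = t3 n" using ev2 by eventually_elim auto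
    ultimately show ?thesis by (simp add: tendsto_cong)
  qed
  have mz: "(\<lambda>n. mm n * z n) \<longlonglongrightarrow> K"
  proof -
    have "(\<lambda>n. t3 n * (1 - z n)) \<longlonglongrightarrow> K * (1 - 0)" using t3lim z0 by (intro tendsto_intros)
    moreover have "\<forall>\<^sub>F n in sequentially. t3 n * (1 - z n) = mm n * z n" using ev2
      by eventually_elim (auto simp: t3_def)
    ultimately show ?thesis by (simp add: tendsto_cong)
  qed
  have "(\<lambda>n. mm n * z n * (real n / mm n)) \<longlonglongrightarrow> K * (1 / b)" using mz nm by (rule tendsto_mult)
  moreover have "\<forall>\<^sub>F n in sequentially. mm n * z n * (real n / mm n) = real n * q n ^ k" using ev2
    by eventually_elim (auto simp: z_def)
  ultimately show ?thesis by (simp add: tendsto_cong)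
qed



lemma foc_to_asym:
  fixes q K N M :: real and k :: nat
  assumes q: "0 < q" and k: "k \<ge> 2"
    and e: "K / q = K*(q*(q*q)^(k-2))/(1 - q*(q*(q*q)^(k-2))) + N*(q*(q*q)^(k-1))/(1 - q*(q*(q*q)^(k-1)))
       + M*(q^(k-1))/(1 - q*q^(k-1))"
  shows "K = K*q^(2*k-2)/(1 - q^(2*k-2)) + N*(q^k)^2/(1 - (q^k)^2) + M*q^k/(1 - q^k)"
proof -
  define j where "j = k - 2"
  have j: "k = j + 2" using k j_def by simp
  have qq: "(q*q)^i = q^(2*i)" for i by (simp add: power_mult power2_eq_square)
  have p1: "q*(q*(q*q)^(k-2)) = q^(2*k-2)"
  proof -
    have "q*(q*(q*q)^(k-2)) = q^(Suc (Suc (2*j)))" unfolding qq j by simp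
    also have "Suc (Suc (2*j)) = 2*k-2" using j by simp
    finally show ?thesis .
  qed
  have p2: "q*(q*(q*q)^(k-1)) = (q^k)^2"
  proof -
    have "q*(q*(q*q)^(k-1)) = q^(Suc (Suc (2*(k-1))))" unfolding qq by simp
    also have "Suc (Suc (2*(k-1))) = k*2" using k by simp
    finally show ?thesis by (simp add: power_mult)
  qed
  have p3: "q*q^(k-1) = q^k" using k by (metis power_eq_if not_numeral_le_zero le_zero_eq)
  have "K = q * (K / q)" using q by simp
  also have "\<dots> = K*(q*(q*(q*q)^(k-2)))/(1 - q*(q*(q*q)^(k-2))) + N*(q*(q*(q*q)^(k-1)))/(1 - q*(q*(q*q)^(k-1)))
       + M*(q*q^(k-1))/(1 - q*q^(k-1))"
    unfolding e by (simp add: distrib_left mult.left_commute times_divide_eq_right)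
  finally show ?thesis unfolding p1 p2 p3 .
qed

lemma powr_root_pow:
  fixes q x :: real and k :: nat
  assumes "0 < q" "0 \<le> x" "k > 0"
  shows "(x * q^k) powr (1 / real k) = q * x powr (1 / real k)"
proof -
  have "(q^k) powr (1 / real k) = q"
    using assms by (simp add: powr_realpow[symmetric] powr_powr)
  then show ?thesis using assms by (simp add: powr_mult)
qed

theorem mainTheorem17:
  fixes k :: nat and b :: real and c :: "real \<Rightarrow> real"
    and P :: "nat \<Rightarrow> nat set" and p0 q0 p1 q1 :: "nat \<Rightarrow> real"
  assumes "k > 2"
    and "0 < b" and "b < 1"
    and "admissible_cost c"
    and "\<And>n. P n \<subseteq> {..<n}"
    and "(\<lambda>n. real (card (P n)) / real n) \<longlonglongrightarrow> b"
    and "eventually (\<lambda>n. symmetric_investment_equilibrium n k c (P n) (p0 n) (q0 n) (p1 n) (q1 n)) sequentially"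
  shows "(\<lambda>n. q0 n * real n powr (1 / real k)) \<longlonglongrightarrow> ((real k - 1) / b) powr (1 / real k)"
proof -
  note k = assms(1) and b = assms(2,3) and P = assms(5) and lim = assms(6) and eqv = assms(7)
  have c0: "c 0 = 0" and cm: "strict_mono_on {0..<1} c" using assms(4) unfolding admissible_cost_def by auto
  define mm where "mm n = real (card (P n))" for n
  define NN where "NN n = real (card ({..<n} - P n) - k)" for n
  define K where "K = real (k - 1)"
  have K: "K > 0" using k by (simp add: K_def)
  have fP: "finite (P n)" for n using P finite_subset by blast
  have cU: "card ({..<n} - P n) = n - card (P n)" for n using P fP by (simp add: card_Diff_subset)
  have cPn: "card (P n) \<le> n" for n using P card_mono[of "{..<n}" "P n"] by simp
  have ev_m: "\<forall>\<^sub>F n in sequentially. card (P n) \<ge> 1"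
  proof -
    have "\<forall>\<^sub>F n in sequentially. real (card (P n)) / real n > 0"
      by (rule order_tendstoD(1)[OF lim]) (use b in simp)
    then show ?thesis by eventually_elim (auto simp: zero_less_divide_iff)
  qed
  have ev_u: "\<forall>\<^sub>F n in sequentially. card ({..<n} - P n) \<ge> k"
  proof -
    define u where "u n = real n - real (card (P n))" for n
    have "(\<lambda>n. 1 - real (card (P n)) / real n) \<longlonglongrightarrow> 1 - b" using lim by (intro tendsto_intros)
    then have "filterlim (\<lambda>n. (1 - real (card (P n)) / real n) * real n) at_top sequentially"
      by (rule filterlim_tendsto_pos_mult_at_top) (use b filterlim_real_sequentially in auto)
    then have "\<forall>\<^sub>F n in sequentially. (1 - real (card (P n)) / real n) * real n \<ge> real k"
      by (simp add: filterlim_at_top)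
    then show ?thesis using eventually_gt_at_top[of 0]
    proof eventually_elim
      case (elim n)
      have "(1 - real (card (P n)) / real n) * real n = real n - real (card (P n))"
        using elim by (simp add: left_diff_distrib)
      then have "real n - real (card (P n)) \<ge> real k" using elim by linarith
      then show ?case using cU[of n] cPn[of n] by simp
    qed
  qed
  have ev: "\<forall>\<^sub>F n in sequentially. 0 < q0 n \<and> q0 n < 1 \<and> 0 \<le> NN n \<and> NN n \<le> real n \<and> 0 \<le> mm n \<and>
      K = K * q0 n^(2*k-2)/(1 - q0 n^(2*k-2)) + NN n * (q0 n^k)^2/(1 - (q0 n^k)^2) + mm n * q0 n^k/(1 - q0 n^k)"
    using eqv ev_m ev_u
  proof eventually_elim
    case (elim n)
    have E: "0 < q0 n \<and> q0 n < 1 \<and> q1 n = 1 \<and>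
    real (k-1) / q0 n = real (k-1) * (q0 n*(q0 n*q0 n)^(k-2)) / (1 - q0 n*(q0 n*(q0 n*q0 n)^(k-2)))
      + real (card ({..<n} - P n) - k) * (q0 n*(q0 n*q0 n)^(k-1)) / (1 - q0 n*(q0 n*(q0 n*q0 n)^(k-1)))
      + real (card (P n)) * (q1 n*(q1 n*q0 n)^(k-1)) / (1 - q0 n*(q1 n*(q1 n*q0 n)^(k-1)))"
      by (rule eq_consequences[OF k P elim(2) elim(3) c0 cm elim(1)])
    then have q: "0 < q0 n" "q0 n < 1" "q1 n = 1" by auto
    have F: "K / q0 n = K * (q0 n*(q0 n*q0 n)^(k-2)) / (1 - q0 n*(q0 n*(q0 n*q0 n)^(k-2)))
      + NN n * (q0 n*(q0 n*q0 n)^(k-1)) / (1 - q0 n*(q0 n*(q0 n*q0 n)^(k-1)))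
      + mm n * (q0 n^(k-1)) / (1 - q0 n*q0 n^(k-1))"
      using E unfolding K_def NN_def mm_def q(3) mult_1_left by blast
    have "NN n \<le> real n" unfolding NN_def using cU[of n] by simp
    then show ?case using foc_to_asym[OF q(1) _ F] k q by (simp add: NN_def mm_def)
  qed
  have L: "(\<lambda>n. real n * q0 n ^ k) \<longlonglongrightarrow> K / b"
    by (rule asym[OF _ K b(1) _ ev]) (use k lim in \<open>auto simp: mm_def\<close>)
  have "(\<lambda>n. (real n * q0 n ^ k) powr (1 / real k)) \<longlonglongrightarrow> (K / b) powr (1 / real k)"
    by (rule tendsto_powr[OF L tendsto_const]) (use K b in simp)
  moreover have "\<forall>\<^sub>F n in sequentially. (real n * q0 n ^ k) powr (1 / real k) = q0 n * real n powr (1 / real k)"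
    using ev by eventually_elim (rule powr_root_pow, use k in auto)
  moreover have "K = real k - 1" unfolding K_def using k by (simp add: of_nat_diff)
  ultimately show ?thesis by (simp add: tendsto_cong)
qed

end
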